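(* Let $\varphi:\Sigma_2(\mathbb{N})\to C$ be a finite coloring and $k\ge0$ an integer. Then there exist an infinite set $\mathcal{N}\subseteq\mathbb{N}$ and colors $c_0,c_1,\dots,c_k\in C$ such that for each $0\le i\le k$, $\Sigma_2(\mathcal{N}+i)\subseteq\varphi^{-1}(c_i)$.
   Context: $\mathbb{N}=\{0,1,2,\dots\}$; $\Sigma_2(S)$ denotes the set of 2-element subsets of $S$; $\mathcal{N}+i=\{n+i:n\in\mathcal{N}\}$; $C$ is a finite non-empty set. *)

theory Defs
  imports Main
begin

definition Sigma2 :: "'a set \<Rightarrow> 'a set set" where
  "Sigma2 S = {e. e \<subseteq> S \<and> card e = 2}"

definition shift :: "nat set \<Rightarrow> nat \<Rightarrow> nat set" where
  "shift N i = (\<lambda>n. n + i) ` N"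

end

theory Submission
  imports Defs "HOL-Library.Ramsey"
begin

lemma shift_card: "card ((\<lambda>n::nat. n + i) ` X) = card X"
  by (simp add: card_image inj_on_def)

lemma sigma2_shift:
  assumes "e \<in> Sigma2 (shift Y i)"
  shows "\<exists>X. X \<subseteq> Y \<and> finite X \<and> card X = 2 \<and> e = (\<lambda>n. n + i) ` X"
proof -
  from assms have "e \<subseteq> (\<lambda>n. n + i) ` Y" "card e = 2"
    by (auto simp: Sigma2_def shift_def)
  then obtain X where X: "X \<subseteq> Y" "e = (\<lambda>n. n + i) ` X" by (auto simp: subset_image_iff)
  with \<open>card e = 2\<close> have "card X = 2" by (simp add: shift_card)
  then have "finite X" by (metis card.infinite zero_neq_numeral)
  with X \<open>card X = 2\<close> show ?thesis by blast
qed

lemma step: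
  fixes \<phi> :: "nat set \<Rightarrow> 'c"
  assumes "finite C" "\<forall>e \<in> Sigma2 (UNIV :: nat set). \<phi> e \<in> C" "infinite Z"
  shows "\<exists>Y c. Y \<subseteq> Z \<and> infinite Y \<and> c \<in> C \<and> Sigma2 (shift Y j) \<subseteq> \<phi> -` {c}"
proof -
  obtain g where g: "bij_betw g C {..<card C}"
    using assms(1) by (metis ex_bij_betw_finite_nat atLeast0LessThan)
  define f where "f X = g (\<phi> ((\<lambda>n. n + j) ` X))" for X :: "nat set"
  have inC: "\<phi> ((\<lambda>n. n + j) ` X) \<in> C" if "card X = 2" for X :: "nat set"
    using assms(2) that by (auto simp: Sigma2_def shift_card)
  have "\<forall>X. X \<subseteq> Z \<and> finite X \<and> card X = 2 \<longrightarrow> f X < card C"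
    using inC g unfolding f_def bij_betw_def by auto
  from Ramsey[OF assms(3) this] obtain Y t where Y: "Y \<subseteq> Z" "infinite Y" "t < card C"
    "\<forall>X. X \<subseteq> Y \<and> finite X \<and> card X = 2 \<longrightarrow> f X = t" by blast
  define c where "c = inv_into C g t"
  have cC: "c \<in> C" using g Y(3) unfolding c_def
    by (metis bij_betw_def bij_betw_inv_into_left inv_into_into lessThan_iff)
  have "Sigma2 (shift Y j) \<subseteq> \<phi> -` {c}"
  proof
    fix e assume "e \<in> Sigma2 (shift Y j)"
    from sigma2_shift[OF this] obtain X where X: "X \<subseteq> Y" "finite X" "card X = 2"
      "e = (\<lambda>n. n + j) ` X" by blast
    have "f X = t" using Y(4) X by blast
    then have "g (\<phi> e) = t" using X(4) by (simp add: f_def)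
    moreover have "\<phi> e \<in> C" using inC X by simp
    ultimately have "\<phi> e = c" unfolding c_def using g
      by (metis bij_betw_def inv_into_f_f)
    then show "e \<in> \<phi> -` {c}" by simp
  qed
  with Y cC show ?thesis by blast
qed

lemma shift_mono: "Y \<subseteq> N \<Longrightarrow> Sigma2 (shift Y i) \<subseteq> Sigma2 (shift N i)"
  unfolding Sigma2_def shift_def using image_mono[of Y N "\<lambda>n. n + i"] by blast

theorem proposition3p1:
  fixes \<phi> :: "nat set \<Rightarrow> 'c" and C :: "'c set" and k :: nat
  assumes "finite C" and "C \<noteq> {}"
    and "\<forall>e \<in> Sigma2 (UNIV :: nat set). \<phi> e \<in> C"
  shows "\<exists>N :: nat set. infinite N \<and> (\<exists>c :: nat \<Rightarrow> 'c. (\<forall>i \<le> k. c i \<in> C) \<and>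
           (\<forall>i \<le> k. Sigma2 (shift N i) \<subseteq> \<phi> -` {c i}))"
proof (induction k)
  case 0
  from step[OF assms(1,3), of UNIV 0] obtain Y c where
    "infinite Y" "c \<in> C" "Sigma2 (shift Y 0) \<subseteq> \<phi> -` {c}" by auto
  then show ?case by (intro exI[of _ Y] conjI exI[of _ "\<lambda>_. c"]) auto
next
  case (Suc k)
  then obtain N c where N: "infinite N" "\<forall>i \<le> k. c i \<in> C"
    "\<forall>i \<le> k. Sigma2 (shift N i) \<subseteq> \<phi> -` {c i}" by blast
  from step[OF assms(1,3) N(1), of "Suc k"] obtain Y d where
    Y: "Y \<subseteq> N" "infinite Y" "d \<in> C" "Sigma2 (shift Y (Suc k)) \<subseteq> \<phi> -` {d}" by blast
  show ?case
  proof (intro exI[of _ Y] conjI exI[of _ "c(Suc k := d)"] allI impI)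
    show "infinite Y" by fact
    fix i assume "i \<le> Suc k"
    then show "(c(Suc k := d)) i \<in> C" using N Y by (cases "i = Suc k") auto
  next
    fix i assume "i \<le> Suc k"
    then show "Sigma2 (shift Y i) \<subseteq> \<phi> -` {(c(Suc k := d)) i}"
      using N(3) Y(4) shift_mono[OF Y(1), of i]
      by (cases "i = Suc k") (auto simp: le_Suc_eq, blast)
  qed
qed

end
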